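(* Let $m\ge5$ be odd, $N=3^m-1$ and $n=\frac{3^m-1}{2}$. Let $\beta$ be a primitive element of $\mathrm{GF}(3^m)$ (so $\beta^n=-1$). For $j\in\{1,3\}$ let $$g_{(j,m)}(x)=\prod_{\substack{1\le i\le N-1\\ \mathrm{wt}_3(i)\equiv j\ (\mathrm{mod}\ 4)}}(x-\beta^i)\in\mathrm{GF}(3)[x],$$ and let $\mathcal{C}_{(j,m)}$ be the ternary negacyclic code of length $n$ with generator polynomial $g_{(j,m)}(x)$. Then $\mathcal{C}_{(1,m)}$ has parameters $$\left[\frac{3^m-1}{2},\ \frac{3^m-1+2(-1)^{(m+1)/2}}{4},\ d\right],\quad d\ge\frac{3^{(m-1)/2}+2+(-1)^{(m-1)/2}}{4}+3,$$ and $\mathcal{C}_{(1,m)}^\perp=\mathcal{C}_{(3,m)}$, which has parameters $$\left[\frac{3^m-1}{2},\ \frac{3^m-1+2(-1)^{(m-1)/2}}{4},\ d^\perp\right],\quad d^\perp\ge\frac{3^{(m-1)/2}-(-1)^{(m-1)/2}}{4}+2.$$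
   Context: For $0\le i\le 3^m-1$ with $3$-adic expansion $i=\sum_{j=0}^{m-1}i_j3^j$, $i_j\in\{0,1,2\}$, the $3$-weight is $\mathrm{wt}_3(i)=\sum_j i_j$ (note $\mathrm{wt}_3(i)\equiv i\pmod 2$, so the indices in the product are odd and $g_{(j,m)}$ divides $x^n+1$). A ternary negacyclic code of length $n$ is an ideal of $\mathrm{GF}(3)[x]/(x^n+1)$, with codewords $(c_0,\dots,c_{n-1})\leftrightarrow\sum c_ix^i$. $[n,k,d]$ denotes length, dimension, minimum Hamming distance; $\perp$ is the Euclidean dual. *)

theory Defs
  imports "HOL-Computational_Algebra.Polynomial" Complex_Main
begin

fun wt3 :: "nat \<Rightarrow> nat" where
  "wt3 i = (if i = 0 then 0 else i mod 3 + wt3 (i div 3))"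

definition prime_subfield :: "'a::field set" where
  "prime_subfield = range of_nat"

definition primitive_element :: "'a::field \<Rightarrow> bool" where
  "primitive_element b \<longleftrightarrow> b \<noteq> 0 \<and> (\<forall>x. x \<noteq> 0 \<longrightarrow> (\<exists>i::nat. x = b ^ i))"

definition prime_polys :: "'a::field poly set" where
  "prime_polys = {p. \<forall>i. coeff p i \<in> prime_subfield}"

text \<open>Ambient space GF(3)^n, vectors (c_0,...,c_{n-1}) identified with polynomials of degree < n.\<close>
definition ambient :: "nat \<Rightarrow> 'a::field poly set" where
  "ambient n = {p \<in> prime_polys. \<forall>i\<ge>n. coeff p i = 0}"

definition gpoly :: "'a::field \<Rightarrow> nat \<Rightarrow> nat \<Rightarrow> 'a poly" where
  "gpoly b j m = (\<Prod>i\<in>{i. 1 \<le> i \<and> i \<le> 3^m - 2 \<and> wt3 i mod 4 = j}. [:- (b ^ i), 1:])"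

text \<open>Negacyclic code of length n generated by g: the ideal generated by g in GF(3)[x]/(x^n+1).\<close>
definition negacyclic_code :: "nat \<Rightarrow> 'a::field poly \<Rightarrow> 'a poly set" where
  "negacyclic_code n g = {(a * g) mod (monom 1 n + 1) | a. a \<in> prime_polys}"

definition hamming_dist :: "nat \<Rightarrow> 'a::zero poly \<Rightarrow> 'a poly \<Rightarrow> nat" where
  "hamming_dist n c c' = card {i. i < n \<and> coeff c i \<noteq> coeff c' i}"

definition min_dist :: "nat \<Rightarrow> 'a::zero poly set \<Rightarrow> nat" where
  "min_dist n C = Min {hamming_dist n c c' | c c'. c \<in> C \<and> c' \<in> C \<and> c \<noteq> c'}"

definition dual_code :: "nat \<Rightarrow> 'a::field poly set \<Rightarrow> 'a poly set" where
  "dual_code n C = {v \<in> ambient n. \<forall>c\<in>C. (\<Sum>i<n. coeff v i * coeff c i) = 0}"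

definition has_dim3 :: "'a set \<Rightarrow> nat \<Rightarrow> bool" where
  "has_dim3 C k \<longleftrightarrow> finite C \<and> card C = 3 ^ k"

end

theory Submission
  imports Defs
begin
section \<open>Characteristic 3\<close>

lemma sum_UNIV_shift:
  fixes c :: "'a::{field,finite}"
  shows "of_nat (card (UNIV::'a set)) * c = 0"
proof -
  have r: "range (\<lambda>x. x + c) = UNIV"
    by (metis (mono_tags, lifting) diff_add_cancel surj_def)
  have "(\<Sum>x\<in>UNIV. x + c) = (\<Sum>x\<in>range (\<lambda>x. x + c). x)"
    by (subst sum.reindex) (auto simp: inj_on_def)
  hence "(\<Sum>x\<in>UNIV. x) = (\<Sum>x\<in>UNIV. x + c)" using r by simp
  also have "\<dots> = (\<Sum>x\<in>UNIV. x) + of_nat (card (UNIV::'a set)) * c"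
    by (simp add: sum.distrib)
  finally show ?thesis by simp
qed

lemma char3:
  assumes "card (UNIV :: 'a::{field,finite} set) = 3 ^ m"
  shows "(3::'a) = 0"
proof -
  have "(of_nat (3^m) :: 'a) = 0" using sum_UNIV_shift[of "1::'a"] assms by simp
  hence "(3::'a)^m = 0" by simp
  thus ?thesis by simp
qed

definition fr :: "'a::field poly \<Rightarrow> 'a poly" where
  "fr p = map_poly (\<lambda>x. x^3) p"

locale char3 =
  fixes ty :: "'a::field itself"
  assumes three: "(3::'a) = 0"
begin

lemma two_ne0: "(2::'a) \<noteq> 0"
proof
  assume "(2::'a) = 0"
  have "(1::'a) = 3 - 2" by simp
  thus False using three \<open>(2::'a) = 0\<close> by simp
qed

lemma cube_add: "((x::'a) + y)^3 = x^3 + y^3"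
proof -
  have "(x+y)^3 = x^3 + y^3 + 3 * (x*x*y + x*y*y)" by (simp add: power3_eq_cube algebra_simps)
  thus ?thesis using three by simp
qed

lemma cube_minus: "((x::'a) - y)^3 = x^3 - y^3"
proof -
  have "(x-y)^3 = x^3 - y^3 - 3 * (x*x*y - x*y*y)" by (simp add: power3_eq_cube algebra_simps)
  thus ?thesis using three by simp
qed

lemma cube_inj: "((x::'a)^3 = y^3) \<longleftrightarrow> x = y"
proof
  assume "x^3 = y^3"
  hence "(x-y)^3 = 0" by (simp add: cube_minus)
  thus "x = y" by simp
qed simp

lemma of_nat_mod3: "(of_nat k :: 'a) = of_nat (k mod 3)"
proof -
  have e: "(of_nat (3 * (k div 3) + k mod 3) :: 'a) = 3 * of_nat (k div 3) + of_nat (k mod 3)" by (simp only: of_nat_add of_nat_mult of_nat_numeral)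
  have "k = 3 * (k div 3) + k mod 3" by simp
  hence "(of_nat k :: 'a) = of_nat (3 * (k div 3) + k mod 3)" by (rule arg_cong)
  hence "(of_nat k :: 'a) = 3 * of_nat (k div 3) + of_nat (k mod 3)" using e by (simp only:)
  thus ?thesis using three by simp
qed

lemma pf_iff: "(x::'a) \<in> prime_subfield \<longleftrightarrow> x^3 = x"
proof
  assume "x \<in> prime_subfield"
  then obtain k where k: "x = of_nat k" by (auto simp: prime_subfield_def)
  have "k mod 3 < 3" by simp
  hence "k mod 3 = 0 \<or> k mod 3 = 1 \<or> k mod 3 = 2" by linarith
  moreover have "(2::'a)^3 = 2"
  proof -
    have "(2::'a)^3 = 2 + 2*3" by simp
    thus ?thesis using three by simp
  qed
  ultimately show "x^3 = x" using k of_nat_mod3[of k] by auto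
next
  assume h: "x^3 = x"
  have "x*(x-1)*(x-2) = x^3 - x + 3*(x - x*x)" by (simp add: power3_eq_cube algebra_simps)
  hence "x*(x-1)*(x-2) = 0" using h three by simp
  hence "x = 0 \<or> x = 1 \<or> x = 2" by auto
  thus "x \<in> prime_subfield" unfolding prime_subfield_def
    by (metis of_nat_0 of_nat_1 of_nat_numeral rangeI)
qed

lemma pf_card: "card (prime_subfield :: 'a set) = 3"
proof -
  have "prime_subfield = {0,1,(2::'a)}"
  proof
    show "prime_subfield \<subseteq> {0,1,(2::'a)}"
    proof
      fix x :: 'a assume "x \<in> prime_subfield"
      then obtain k where k: "x = of_nat k" by (auto simp: prime_subfield_def)
      have "k mod 3 = 0 \<or> k mod 3 = 1 \<or> k mod 3 = 2" by linarith
      thus "x \<in> {0,1,2}" using k of_nat_mod3[of k] by auto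
    qed
    show "{0,1,(2::'a)} \<subseteq> prime_subfield" unfolding prime_subfield_def
      by (metis empty_subsetI insert_subset of_nat_0 of_nat_1 of_nat_numeral rangeI)
  qed
  moreover have "(1::'a) \<noteq> 2"
  proof
    assume "(1::'a) = 2" hence "(2::'a) - 1 = 0" by simp
    thus False by simp
  qed
  moreover have "card {0,1,(2::'a)} = 3" using \<open>(1::'a) \<noteq> 2\<close> two_ne0 by (simp add: card_insert_if)
  ultimately show ?thesis by simp
qed

lemma pf_add: "x \<in> prime_subfield \<Longrightarrow> y \<in> prime_subfield \<Longrightarrow> (x::'a) + y \<in> prime_subfield"
  by (simp add: pf_iff cube_add)
lemma pf_diff: "x \<in> prime_subfield \<Longrightarrow> y \<in> prime_subfield \<Longrightarrow> (x::'a) - y \<in> prime_subfield"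
  by (simp add: pf_iff cube_minus)
lemma pf_mult: "x \<in> prime_subfield \<Longrightarrow> y \<in> prime_subfield \<Longrightarrow> (x::'a) * y \<in> prime_subfield"
  by (simp add: pf_iff power_mult_distrib)
lemma pf_0: "(0::'a) \<in> prime_subfield" by (simp add: pf_iff)
lemma pf_1: "(1::'a) \<in> prime_subfield" by (simp add: pf_iff)

section \<open>Frobenius on polynomials\<close>


lemma coeff_fr: "coeff (fr (p::'a poly)) i = (coeff p i)^3"
  unfolding fr_def by (simp add: coeff_map_poly)

lemma fr_add: "fr ((p::'a poly) + q) = fr p + fr q"
  by (rule poly_eqI) (simp add: coeff_fr cube_add)

lemma fr_diff: "fr ((p::'a poly) - q) = fr p - fr q"
  by (rule poly_eqI) (simp add: coeff_fr cube_minus)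

lemma fr_smult: "fr (smult (c::'a) p) = smult (c^3) (fr p)"
  by (rule poly_eqI) (simp add: coeff_fr power_mult_distrib)

lemma fr_pCons: "fr (pCons (a::'a) p) = pCons (a^3) (fr p)"
  by (rule poly_eqI) (simp add: coeff_fr coeff_pCons split: nat.split)

lemma fr_mult: "fr ((p::'a poly) * q) = fr p * fr q"
proof (induction p)
  case 0
  then show ?case by (simp add: fr_def)
next
  case (pCons a p)
  have "fr (pCons a p * q) = fr (smult a q + pCons 0 (p * q))" by simp
  also have "\<dots> = smult (a^3) (fr q) + pCons 0 (fr p * fr q)"
    using pCons by (simp add: fr_add fr_smult fr_pCons)
  also have "\<dots> = fr (pCons a p) * fr q" by (simp add: fr_pCons)
  finally show ?case .
qed

lemma fr_eq_iff: "fr (p::'a poly) = fr q \<longleftrightarrow> p = q"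
proof
  assume "fr p = fr q"
  hence "\<And>i. (coeff p i)^3 = (coeff q i)^3" by (metis coeff_fr)
  hence "\<And>i. coeff p i = coeff q i" using cube_inj by blast
  thus "p = q" by (rule poly_eqI)
next
  assume "p = q" thus "fr p = fr q" by simp
qed

lemma fr_0: "fr 0 = 0" by (simp add: fr_def)
lemma fr_1: "fr 1 = 1" by (simp add: fr_def)

lemma degree_fr: "degree (fr p) = degree p"
proof (cases "p = 0")
  case True thus ?thesis by (simp add: fr_0)
next
  case False thus ?thesis unfolding fr_def by (intro map_poly_degree_eq) simp_all
qed

lemma pp_iff: "(p::'a poly) \<in> prime_polys \<longleftrightarrow> fr p = p"
  unfolding prime_polys_def by (auto simp: pf_iff coeff_fr poly_eq_iff)

lemma pp_add: "(p::'a poly) \<in> prime_polys \<Longrightarrow> q \<in> prime_polys \<Longrightarrow> p + q \<in> prime_polys"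
  unfolding pp_iff by (simp add: fr_add)
lemma pp_diff: "(p::'a poly) \<in> prime_polys \<Longrightarrow> q \<in> prime_polys \<Longrightarrow> p - q \<in> prime_polys"
  unfolding pp_iff by (simp add: fr_diff)
lemma pp_mult: "(p::'a poly) \<in> prime_polys \<Longrightarrow> q \<in> prime_polys \<Longrightarrow> p * q \<in> prime_polys"
  unfolding pp_iff by (simp add: fr_mult)
lemma pp_0: "(0::'a poly) \<in> prime_polys" by (simp add: pp_iff fr_0)
lemma pp_1: "(1::'a poly) \<in> prime_polys" by (simp add: pp_iff fr_1)
lemma pp_monom: "(c::'a) \<in> prime_subfield \<Longrightarrow> monom c k \<in> prime_polys"
  unfolding prime_polys_def by (auto simp: coeff_monom pf_0)

lemma pp_divmod:
  fixes a b :: "'a poly"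
  assumes "a \<in> prime_polys" "b \<in> prime_polys"
  shows "a div b \<in> prime_polys \<and> a mod b \<in> prime_polys"
proof (cases "b = 0")
  case True thus ?thesis using assms by simp
next
  case False
  have e: "a = a div b * b + a mod b" by simp
  have fa: "fr a = a" "fr b = b" using assms by (auto simp: pp_iff)
  have "fr a = fr (a div b) * fr b + fr (a mod b)"
    by (metis e fr_add fr_mult)
  hence e2: "a = fr (a div b) * b + fr (a mod b)" using fa by simp
  have dr: "fr (a mod b) = 0 \<or> degree (fr (a mod b)) < degree b"
    using degree_mod_less[OF False, of a] by (auto simp: degree_fr fr_0)
  have rmod: "fr (a mod b) mod b = fr (a mod b)" and rdiv: "fr (a mod b) div b = 0"
    using dr by (auto simp: mod_poly_less div_poly_less)
  have "a div b = fr (a div b)"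
    using e2 rdiv False by (metis add.commute add_0 div_mult_self1)
  moreover have "a mod b = fr (a mod b)"
    using e2 rmod by (metis add.commute mod_mult_self1)
  ultimately have "fr (a div b) = a div b \<and> fr (a mod b) = a mod b" by simp
  thus ?thesis by (simp add: pp_iff)
qed

lemma fr_prod: "fr (prod (f::_ \<Rightarrow> 'a poly) A) = prod (\<lambda>x. fr (f x)) A"
  by (induction A rule: infinite_finite_induct) (auto simp: fr_mult fr_1)

lemma fr_lin: "fr [:- (a::'a), 1:] = [:- (a^3), 1:]"
  by (simp add: fr_pCons fr_0 power3_eq_cube)

section \<open>The ambient space\<close>

lemma ambient_iff: "p \<in> ambient n \<longleftrightarrow> p \<in> prime_polys \<and> (p = 0 \<or> degree p < n)"
proof -
  have "(\<forall>i\<ge>n. coeff p i = 0) \<longleftrightarrow> (p = 0 \<or> degree p < n)"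
  proof
    assume h: "\<forall>i\<ge>n. coeff p i = 0"
    show "p = 0 \<or> degree p < n"
    proof (rule ccontr)
      assume "\<not> (p = 0 \<or> degree p < n)"
      hence "p \<noteq> 0" "degree p \<ge> n" by auto
      hence "coeff p (degree p) = 0" using h by auto
      thus False using \<open>p \<noteq> 0\<close> by simp
    qed
  next
    assume "p = 0 \<or> degree p < n"
    thus "\<forall>i\<ge>n. coeff p i = 0" by (auto intro: coeff_eq_0)
  qed
  thus ?thesis unfolding ambient_def by auto
qed

lemma card_ambient: "card (ambient k :: 'a poly set) = 3 ^ k"
proof -
  let ?L = "{xs. set xs \<subseteq> (prime_subfield::'a set) \<and> length xs = k}"
  have fin: "finite (prime_subfield :: 'a set)" using pf_card by (metis card.infinite zero_neq_numeral)
  have "bij_betw Poly ?L (ambient k)"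
  proof (rule bij_betw_byWitness[where f'="\<lambda>p. map (coeff p) [0..<k]"])
    show "Poly ` ?L \<subseteq> ambient k"
    proof
      fix p assume "p \<in> Poly ` ?L"
      then obtain xs where xs: "xs \<in> ?L" "p = Poly xs" by auto
      thus "p \<in> ambient k"
        unfolding ambient_def prime_polys_def
        by (auto simp: nth_default_def pf_0 subset_iff)
    qed
    show "(\<lambda>p. map (coeff p) [0..<k]) ` ambient k \<subseteq> ?L"
      unfolding ambient_def prime_polys_def by auto
    show "\<forall>xs\<in>?L. map (coeff (Poly xs)) [0..<k] = xs"
      by (auto simp: nth_default_def intro: nth_equalityI)
    show "\<forall>p\<in>ambient k. Poly (map (coeff p) [0..<k]) = p"
      unfolding ambient_def
      by (auto simp: poly_eq_iff nth_default_def not_less)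
  qed
  hence "card (ambient k :: 'a poly set) = card ?L" by (simp add: bij_betw_same_card)
  thus ?thesis using card_lists_length_eq[OF fin] pf_card by simp
qed

lemma finite_ambient: "finite (ambient k :: 'a poly set)"
  using card_ambient[of k] by (metis card.infinite power_not_zero zero_neq_numeral)

end

lemma wt3_eq: "wt3 i = i mod 3 + wt3 (i div 3)"
  by (cases "i = 0") simp_all

declare wt3.simps[simp del]

lemma wt3_0[simp]: "wt3 0 = 0" by (simp add: wt3.simps)

lemma wt3_3q: "d < 3 \<Longrightarrow> wt3 (3*q + d) = d + wt3 q"
  by (subst wt3_eq) simp

lemma wt3_small: "d < 3 \<Longrightarrow> wt3 d = d"
  using wt3_3q[of d 0] by simp

lemma par_aux:
  assumes "w mod 2 = a mod 2" "i = 3*a + b" "x = b + w"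
  shows "x mod 2 = i mod (2::nat)"
proof -
  have "x mod 2 = (b + w mod 2) mod 2" using assms(3) by (simp add: mod_add_right_eq)
  also have "\<dots> = (b + a mod 2) mod 2" using assms(1) by simp
  also have "\<dots> = (b + a) mod 2" by (simp add: mod_add_right_eq)
  also have "\<dots> = (b + a + a*2) mod 2" by (rule mod_mult_self1[symmetric])
  also have "\<dots> = i mod 2" using assms(2) by (simp add: algebra_simps)
  finally show ?thesis .
qed

lemma mod4_aux:
  fixes r w :: nat assumes r: "r < 4"
  shows "((1 + w) mod 4 = r) = (w mod 4 = (r + 3) mod 4)"
        "((2 + w) mod 4 = r) = (w mod 4 = (r + 2) mod 4)"
proof -
  have e1: "(1 + w) mod 4 = (1 + w mod 4) mod 4" "(2 + w) mod 4 = (2 + w mod 4) mod 4"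
    by (rule mod_add_right_eq[symmetric])+
  have "w mod 4 < 4" by simp
  hence v: "w mod 4 = 0 \<or> w mod 4 = 1 \<or> w mod 4 = 2 \<or> w mod 4 = 3" by linarith
  have rr: "r = 0 \<or> r = 1 \<or> r = 2 \<or> r = 3" using r by linarith
  show "((1 + w) mod 4 = r) = (w mod 4 = (r + 3) mod 4)" unfolding e1 using v rr
    by (elim disjE) simp_all
  show "((2 + w) mod 4 = r) = (w mod 4 = (r + 2) mod 4)" unfolding e1 using v rr
    by (elim disjE) simp_all
qed

lemma wt3_parity: "wt3 i mod 2 = i mod 2"
proof (induction i rule: less_induct)
  case (less i)
  show ?case
  proof (cases "i = 0")
    case True thus ?thesis by simp
  next
    case False
    hence "i div 3 < i" by simp
    hence ih: "wt3 (i div 3) mod 2 = (i div 3) mod 2" using less by simp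
    have "wt3 i = i mod 3 + wt3 (i div 3)" by (rule wt3_eq)
    moreover have "i = 3 * (i div 3) + i mod 3" by simp
    ultimately show ?thesis using ih par_aux by metis
  qed
qed

lemma wt3_add: "y < 3^k \<Longrightarrow> wt3 (x * 3^k + y) = wt3 x + wt3 y"
proof (induction k arbitrary: y)
  case 0 thus ?case by simp
next
  case (Suc k)
  define q d where "q = y div 3" and "d = y mod 3"
  have y: "y = 3*q + d" and d: "d < 3" by (auto simp: q_def d_def)
  have q: "q < 3^k" using Suc.prems y by simp
  have "x * 3^Suc k + y = 3 * (x * 3^k + q) + d" using y by (simp add: algebra_simps)
  hence "wt3 (x * 3^Suc k + y) = wt3 (3 * (x * 3^k + q) + d)" by (rule arg_cong)
  also have "\<dots> = d + wt3 (x * 3^k + q)" using wt3_3q[OF d] by blast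
  finally have "wt3 (x * 3^Suc k + y) = d + wt3 (x * 3^k + q)" .
  also have "\<dots> = d + wt3 x + wt3 q" using Suc.IH[OF q] by simp
  also have "\<dots> = wt3 x + wt3 y" using y wt3_3q[OF d, of q] by simp
  finally show ?case .
qed

lemma wt3_compl: "t < 3^h \<Longrightarrow> wt3 t \<le> 2*h \<and> wt3 (3^h - 1 - t) = 2*h - wt3 t"
proof (induction h arbitrary: t)
  case 0 thus ?case by simp
next
  case (Suc h)
  define q d where "q = t div 3" and "d = t mod 3"
  have t: "t = 3*q + d" and d: "d < 3" by (auto simp: q_def d_def)
  have q: "q < 3^h" using Suc.prems t by simp
  have ih: "wt3 q \<le> 2*h" "wt3 (3^h - 1 - q) = 2*h - wt3 q" using Suc.IH[OF q] by auto
  have wt: "wt3 t = d + wt3 q" using t wt3_3q[OF d] by simp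
  have "3^Suc h - 1 - t = 3 * (3^h - 1 - q) + (2 - d)"
    using t d q by (simp add: algebra_simps)
  hence "wt3 (3^Suc h - 1 - t) = (2 - d) + wt3 (3^h - 1 - q)"
    using wt3_3q[of "2-d"] by simp
  thus ?case using ih wt d by simp
qed

lemma wt3_le: "t < 3^h \<Longrightarrow> wt3 t \<le> 2*h" using wt3_compl by blast

lemma wt3_rot:
  assumes m: "m \<ge> 1" and i: "1 \<le> i" "i \<le> 3^m - 2"
  shows "(3*i) mod (3^m - 1) = 3 * (i mod 3^(m-1)) + i div 3^(m-1)
         \<and> 1 \<le> (3*i) mod (3^m - 1) \<and> (3*i) mod (3^m - 1) \<le> 3^m - 2
         \<and> wt3 ((3*i) mod (3^m - 1)) = wt3 i"
proof -
  define K where "K = (3::nat)^(m-1)"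
  have K3: "3^m = 3*K" using m unfolding K_def by (metis Suc_diff_le diff_Suc_1 power_Suc)
  define a d where "a = i mod K" and "d = i div K"
  have iad: "i = d*K + a" by (simp add: a_def d_def)
  have aK: "a < K" unfolding a_def K_def by simp
  have d2: "d < 3" using i K3 unfolding d_def by (simp add: div_less_iff_less_mult)
  obtain M where M: "3^m = Suc M" using K3 by (metis not0_implies_Suc mult_is_0 power_not_zero zero_neq_numeral)
  have "3*i = 3*a + d*3^m" using iad K3 by (simp add: algebra_simps)
  also have "\<dots> = 3*a + d*Suc M" using M by simp
  also have "\<dots> = (3*a + d) + d * (3^m - 1)" using M by simp
  finally have "3*i = (3*a + d) + d * (3^m - 1)" .
  moreover have lt: "3*a + d < 3^m - 1"
  proof -
    have "3*a + d \<le> 3^m - 1" using aK d2 K3 by linarith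
    moreover have "3*a + d \<noteq> 3^m - 1"
    proof
      assume h: "3*a + d = 3^m - 1"
      hence "d = 2" "a = K - 1" using aK d2 K3 by linarith+
      hence "i = 3^m - 1" using iad K3 by simp
      thus False using i by simp
    qed
    ultimately show ?thesis by simp
  qed
  ultimately have e: "(3*i) mod (3^m - 1) = 3*a + d" by simp
  have pos: "1 \<le> 3*a + d" using i iad by (cases "a = 0") auto
  have "wt3 (3*a + d) = d + wt3 a" by (rule wt3_3q[OF d2])
  moreover have "wt3 i = wt3 d + wt3 a" using iad wt3_add[OF aK[unfolded K_def], of d] by (simp add: K_def)
  moreover have lt2: "3*a + d \<le> 3^m - 2" using lt by linarith
  ultimately show ?thesis using e pos wt3_small[OF d2] by (simp add: a_def d_def K_def)
qed

section \<open>Counting\<close>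

lemma sum_3K: "(\<Sum>i<3*K. f i) = (\<Sum>q<K. f (3*q) + f (3*q+1) + f (3*q+2))"
  for f :: "nat \<Rightarrow> int"
proof (induction K)
  case 0 thus ?case by simp
next
  case (Suc K)
  have e: "3 * Suc K = Suc (Suc (Suc (3*K)))" by simp
  have "(\<Sum>i<Suc (Suc (Suc (3*K))). f i) = (\<Sum>i<3*K. f i) + f (3*K) + f (3*K+1) + f (3*K+2)"
    by simp
  hence "(\<Sum>i<3 * Suc K. f i) = (\<Sum>i<3*K. f i) + f (3*K) + f (3*K+1) + f (3*K+2)"
    unfolding e .
  thus ?case using Suc by simp
qed

definition Cs :: "nat \<Rightarrow> nat \<Rightarrow> int" where
  "Cs m r = (\<Sum>i<3^m. if wt3 i mod 4 = r then 1 else 0)"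

lemma Cs_rec:
  assumes "r < 4"
  shows "Cs (Suc m) r = Cs m r + Cs m ((r + 3) mod 4) + Cs m ((r + 2) mod 4)"
proof -
  have "Cs (Suc m) r = (\<Sum>q<3^m. (if wt3 (3*q) mod 4 = r then 1 else 0)
      + (if wt3 (3*q+1) mod 4 = r then 1 else 0) + (if wt3 (3*q+2) mod 4 = r then 1 else 0))"
    unfolding Cs_def by (simp add: sum_3K)
  also have "\<dots> = (\<Sum>q<3^m. (if wt3 q mod 4 = r then 1 else 0)
      + (if wt3 q mod 4 = (r + 3) mod 4 then 1 else 0) + (if wt3 q mod 4 = (r+2) mod 4 then 1 else 0))"
  proof (rule sum.cong[OF refl])
    fix q
    have a: "wt3 (3*q) = wt3 q" using wt3_3q[of 0 q] by simp
    have b: "wt3 (3*q+1) = 1 + wt3 q" using wt3_3q[of 1 q] by simp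
    have c: "wt3 (3*q+2) = 2 + wt3 q" using wt3_3q[of 2 q] by simp
    have "((1 + wt3 q) mod 4 = r) = (wt3 q mod 4 = (r + 3) mod 4)" using assms by (rule mod4_aux)
    moreover have "((2 + wt3 q) mod 4 = r) = (wt3 q mod 4 = (r + 2) mod 4)" using assms by (rule mod4_aux)
    ultimately show "(if wt3 (3*q) mod 4 = r then 1 else 0)
      + (if wt3 (3*q+1) mod 4 = r then 1 else 0) + (if wt3 (3*q+2) mod 4 = r then 1 else (0::int))
      = (if wt3 q mod 4 = r then 1 else 0)
      + (if wt3 q mod 4 = (r + 3) mod 4 then 1 else 0) + (if wt3 q mod 4 = (r+2) mod 4 then 1 else 0)"
      using a b c by simp
  qed
  also have "\<dots> = Cs m r + Cs m ((r + 3) mod 4) + Cs m ((r + 2) mod 4)"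
    unfolding Cs_def by (simp add: sum.distrib)
  finally show ?thesis .
qed

lemma Cs_rec':
  assumes "r < 4" "r1 = (r + 3) mod 4" "r2 = (r + 2) mod 4"
  shows "Cs (Suc m) r = Cs m r + Cs m r1 + Cs m r2"
  using Cs_rec[OF assms(1)] assms(2,3) by simp

lemma Cs_recs:
  "Cs (Suc m) 0 = Cs m 0 + Cs m 3 + Cs m 2"
  "Cs (Suc m) 1 = Cs m 1 + Cs m 0 + Cs m 3"
  "Cs (Suc m) 2 = Cs m 2 + Cs m 1 + Cs m 0"
  "Cs (Suc m) 3 = Cs m 3 + Cs m 2 + Cs m 1"
  apply (rule Cs_rec', simp, simp, simp)+
  done

lemma Cs_0: "Cs 0 0 = 1" "Cs 0 1 = 0" "Cs 0 2 = 0" "Cs 0 3 = 0"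
  by (simp_all add: Cs_def)

lemma Cs_F: "Cs m 0 + Cs m 2 - Cs m 1 - Cs m 3 = 1"
proof (induction m)
  case 0 show ?case by (simp only: Cs_0)
next
  case (Suc m) show ?case unfolding Cs_recs using Suc by linarith
qed

lemma Cs_T: "Cs m 0 + Cs m 1 + Cs m 2 + Cs m 3 = 3^m"
proof (induction m)
  case 0 show ?case by (simp only: Cs_0) simp
next
  case (Suc m) show ?case unfolding Cs_recs using Suc by simp
qed

lemma Cs_even: "Cs (2*h) 0 - Cs (2*h) 2 = (-1)^h \<and> Cs (2*h) 1 - Cs (2*h) 3 = 0"
proof (induction h)
  case 0 show ?case by (simp only: mult_0_right Cs_0) simp
next
  case (Suc h)
  have e: "2 * Suc h = Suc (Suc (2*h))" by simp
  show ?case unfolding e Cs_recs using Suc by simp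
qed

lemma Cs_odd:
  "4 * Cs (2*h+1) 1 = 3^(2*h+1) - 1 + 2 * (-1)^h"
  "4 * Cs (2*h+1) 3 = 3^(2*h+1) - 1 - 2 * (-1)^h"
proof -
  have e: "Cs (2*h+1) 1 - Cs (2*h+1) 3 = (-1)^h"
    using Cs_even[of h] unfolding Suc_eq_plus1[symmetric] Cs_recs by simp
  show "4 * Cs (2*h+1) 1 = 3^(2*h+1) - 1 + 2 * (-1)^h"
    using e Cs_F[of "2*h+1"] Cs_T[of "2*h+1"] by linarith
  show "4 * Cs (2*h+1) 3 = 3^(2*h+1) - 1 - 2 * (-1)^h"
    using e Cs_F[of "2*h+1"] Cs_T[of "2*h+1"] by linarith
qed

lemma Cs_card: "Cs m r = int (card {i. i < 3^m \<and> wt3 i mod 4 = r})"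
proof -
  have "{i. i < 3^m \<and> wt3 i mod 4 = r} = {i\<in>{..<3^m}. wt3 i mod 4 = r}" by auto
  hence "card {i. i < 3^m \<and> wt3 i mod 4 = r} = (\<Sum>i\<in>{i\<in>{..<(3::nat)^m}. wt3 i mod 4 = r}. 1)"
    by simp
  hence "int (card {i. i < 3^m \<and> wt3 i mod 4 = r}) = (\<Sum>i\<in>{i\<in>{..<(3::nat)^m}. wt3 i mod 4 = r}. (1::int))"
    by simp
  also have "\<dots> = Cs m r" unfolding Cs_def by (subst sum.inter_filter) auto
  finally show ?thesis by simp
qed

lemma prod_roots_dvd:
  fixes p :: "'a::field poly"
  assumes "finite A" "\<And>a. a \<in> A \<Longrightarrow> poly p a = 0"
  shows "(\<Prod>a\<in>A. [:- a, 1:]) dvd p"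
  using assms
proof (induction A arbitrary: p rule: finite_induct)
  case empty thus ?case by simp
next
  case (insert a A)
  have "[:- a, 1:] dvd p" using insert.prems poly_eq_0_iff_dvd by blast
  then obtain q where q: "p = [:- a, 1:] * q" by (auto elim: dvdE)
  have "poly q b = 0" if "b \<in> A" for b
  proof -
    have "poly p b = 0" using insert.prems that by simp
    moreover have "b \<noteq> a" using insert.hyps that by auto
    ultimately show ?thesis using q by simp
  qed
  hence "(\<Prod>a\<in>A. [:- a, 1:]) dvd q" using insert.IH by blast
  have "(\<Prod>a\<in>insert a A. [:- a, 1:]) = [:- a, 1:] * (\<Prod>a\<in>A. [:- a, 1:])"
    using insert.hyps by simp
  thus ?case using q \<open>(\<Prod>a\<in>A. [:- a, 1:]) dvd q\<close> by (metis dvd_refl mult_dvd_mono)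
qed

lemma monic_dvd_eq:
  fixes p q :: "'a::field poly"
  assumes "p dvd q" "q \<noteq> 0" "degree p = degree q" "lead_coeff p = 1" "lead_coeff q = 1"
  shows "p = q"
proof -
  obtain r where r: "q = p * r" using assms(1) by (auto elim: dvdE)
  have "r \<noteq> 0" "p \<noteq> 0" using r assms(2) by auto
  hence "degree q = degree p + degree r" using r by (simp add: degree_mult_eq)
  hence "degree r = 0" using assms(3) by simp
  then obtain c where c: "r = [:c:]" by (metis degree_eq_zeroE)
  have "lead_coeff q = lead_coeff p * c" using r c by (simp add: lead_coeff_mult)
  hence "c = 1" using assms by simp
  thus ?thesis using r c by simp
qed

lemma degree_prod_lin: "degree (\<Prod>i\<in>A. [:- (f i), 1::'a::field:]) = card A"
proof (cases "finite A")
  case True thus ?thesis by (subst degree_prod_sum_eq) auto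
next
  case False thus ?thesis by simp
qed

lemma lead_prod_lin: "lead_coeff (\<Prod>i\<in>A. [:- (f i), 1::'a::field:]) = 1"
  by (simp add: lead_coeff_prod)

lemma odd_mod4:
  assumes "odd (m::nat)" "w \<le> 2*m" "w mod 4 = j" "j = 1 \<or> j = 3"
  shows "(2*m - w) mod 4 = j"
proof -
  obtain k where k: "m = 2*k+1" using assms(1) by (metis oddE)
  define q where "q = w div 4"
  have w: "w = 4*q + j" using assms(3) unfolding q_def by (metis div_mult_mod_eq mult.commute)
  show ?thesis using assms(4)
  proof
    assume j: "j = 1"
    hence "q \<le> k" using w assms(2) k by linarith
    hence "2*m - w = 4*(k - q) + 1" using w k j by simp
    thus ?thesis using j by simp
  next
    assume j: "j = 3"
    hence "q < k" using w assms(2) k by linarith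
    hence "2*m - w = 4*(k - q - 1) + 3" using w k j by simp
    thus ?thesis using j by simp
  qed
qed

locale L =
  fixes \<beta> :: "'a::{field,finite}" and m :: nat
  assumes oddm: "odd m" and m5: "m \<ge> 5"
    and cardU: "card (UNIV :: 'a set) = 3 ^ m"
    and prim: "primitive_element \<beta>"
begin

sublocale char3 "TYPE('a)"
  by unfold_locales (rule char3[OF cardU])

definition "N = (3::nat)^m - 1"
definition "n = ((3::nat)^m - 1) div 2"
definition "S j = {i. 1 \<le> i \<and> i \<le> 3^m - 2 \<and> wt3 i mod 4 = j}"
definition "M = (monom 1 n + 1 :: 'a poly)"
definition "Od = {i::nat. 1 \<le> i \<and> i \<le> 3^m - 2 \<and> odd i}"

lemma m1: "m \<ge> 1" using m5 by simp

lemma N_pos: "N > 0"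
proof -
  have "(3::nat)^1 \<le> 3^m" using m1 by (rule power_increasing) simp
  thus ?thesis unfolding N_def by simp
qed

lemma N_2n: "N = 2*n"
proof -
  have "odd ((3::nat)^m)" by simp
  hence "even ((3::nat)^m - 1)" using m1 by (simp add: N_pos)
  thus ?thesis unfolding N_def n_def by simp
qed

lemma n_pos: "n > 0" using N_pos N_2n by simp

lemma beta_ne0: "\<beta> \<noteq> 0" using prim unfolding primitive_element_def by simp

lemma beta_N: "\<beta> ^ N = 1"
proof -
  let ?A = "UNIV - {0::'a}"
  have fin: "finite ?A" by simp
  have cA: "card ?A = N" unfolding N_def using cardU by (simp add: card_Diff_singleton)
  have bij: "(\<lambda>x. \<beta> * x) ` ?A = ?A"
  proof
    show "(\<lambda>x. \<beta> * x) ` ?A \<subseteq> ?A" using beta_ne0 by auto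
    show "?A \<subseteq> (\<lambda>x. \<beta> * x) ` ?A"
    proof
      fix y assume y: "y \<in> ?A"
      have "y = \<beta> * (y / \<beta>)" using beta_ne0 by simp
      moreover have "y / \<beta> \<in> ?A" using y beta_ne0 by simp
      ultimately show "y \<in> (\<lambda>x. \<beta> * x) ` ?A" by blast
    qed
  qed
  have inj: "inj_on (\<lambda>x. \<beta> * x) ?A" using beta_ne0 by (auto simp: inj_on_def)
  have "(\<Prod>x\<in>?A. x) = (\<Prod>x\<in>(\<lambda>x. \<beta> * x) ` ?A. x)" using bij by simp
  also have "\<dots> = (\<Prod>x\<in>?A. \<beta> * x)" by (rule prod.reindex[OF inj, unfolded comp_def])
  also have "\<dots> = \<beta> ^ card ?A * (\<Prod>x\<in>?A. x)" by (simp add: prod.distrib)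
  finally have "(\<beta> ^ card ?A - 1) * (\<Prod>x\<in>?A. x) = 0" by (simp add: algebra_simps)
  moreover have "(\<Prod>x\<in>?A. x) \<noteq> 0" using fin by simp
  ultimately show ?thesis using cA by simp
qed

lemma beta_pow_mod: "\<beta> ^ k = \<beta> ^ (k mod N)"
proof -
  have "\<beta> ^ k = \<beta> ^ (N * (k div N) + k mod N)" by simp
  also have "\<dots> = (\<beta> ^ N) ^ (k div N) * \<beta> ^ (k mod N)" by (simp only: power_add power_mult)
  finally show ?thesis using beta_N by simp
qed

lemma beta_inj: "inj_on (\<lambda>i. \<beta> ^ i) {..<N}"
proof -
  let ?A = "UNIV - {0::'a}"
  have "?A \<subseteq> (\<lambda>i. \<beta> ^ i) ` {..<N}"
  proof
    fix x assume "x \<in> ?A"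
    then obtain i where "x = \<beta> ^ i" using prim unfolding primitive_element_def by auto
    hence "x = \<beta> ^ (i mod N)" using beta_pow_mod by simp
    moreover have "i mod N < N" using N_pos by simp
    ultimately show "x \<in> (\<lambda>i. \<beta> ^ i) ` {..<N}" by blast
  qed
  hence "card ?A \<le> card ((\<lambda>i. \<beta> ^ i) ` {..<N})" by (intro card_mono) auto
  moreover have "card ?A = N" unfolding N_def using cardU by (simp add: card_Diff_singleton)
  moreover have "card ((\<lambda>i. \<beta> ^ i) ` {..<N}) \<le> N" using card_image_le[of "{..<N}"] by simp
  ultimately have "card ((\<lambda>i. \<beta> ^ i) ` {..<N}) = card {..<N}" by simp
  thus ?thesis by (intro eq_card_imp_inj_on) auto
qed

lemma beta_pow_eq_iff: "\<beta> ^ a = \<beta> ^ b \<longleftrightarrow> a mod N = b mod N"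
proof
  assume "\<beta> ^ a = \<beta> ^ b"
  hence "\<beta> ^ (a mod N) = \<beta> ^ (b mod N)" using beta_pow_mod by metis
  moreover have "a mod N \<in> {..<N}" "b mod N \<in> {..<N}" using N_pos by auto
  ultimately show "a mod N = b mod N" using beta_inj by (auto dest: inj_onD)
next
  assume "a mod N = b mod N"
  thus "\<beta> ^ a = \<beta> ^ b" using beta_pow_mod by metis
qed

lemma beta_n: "\<beta> ^ n = -1"
proof -
  have sq: "(\<beta> ^ n) * (\<beta> ^ n) = 1" using beta_N N_2n by (simp add: power_add[symmetric] mult_2)
  have "\<beta> ^ n \<noteq> \<beta> ^ 0"
  proof
    assume "\<beta> ^ n = \<beta> ^ 0"
    hence "n mod N = 0 mod N" using beta_pow_eq_iff by blast
    thus False using N_2n n_pos by simp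
  qed
  hence ne: "\<beta> ^ n \<noteq> 1" by simp
  have "(\<beta> ^ n - 1) * (\<beta> ^ n + 1) = 0" using sq by (simp add: algebra_simps)
  thus ?thesis using ne by (simp add: eq_neg_iff_add_eq_0)
qed

lemma S_sub: "S j \<subseteq> {1..N-1}" unfolding S_def N_def by auto
lemma S_sub': "S j \<subseteq> {..<N}" unfolding S_def N_def using m1 by auto
lemma finite_S: "finite (S j)" using S_sub by (rule finite_subset) simp
lemma Od_sub': "Od \<subseteq> {..<N}" unfolding Od_def N_def using m1 by auto
lemma finite_Od: "finite Od" using Od_sub' by (rule finite_subset) simp

lemma odd4: "odd (w::nat) \<longleftrightarrow> (w mod 4 = 1 \<or> w mod 4 = 3)"
proof -
  have e: "w mod 2 = w mod 4 mod 2" by (simp add: mod_mod_cancel)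
  have "w mod 4 < 4" by simp
  hence "w mod 4 = 0 \<or> w mod 4 = 1 \<or> w mod 4 = 2 \<or> w mod 4 = 3" by linarith
  thus ?thesis using e by (auto simp: odd_iff_mod_2_eq_one)
qed

lemma odd_wt3: "odd i \<longleftrightarrow> odd (wt3 i)"
  using wt3_parity[of i] by (simp add: odd_iff_mod_2_eq_one)

lemma S_odd: "j = 1 \<or> j = 3 \<Longrightarrow> i \<in> S j \<Longrightarrow> odd i"
  unfolding S_def using odd_wt3[of i] odd4[of "wt3 i"] by auto

lemma Od_eq: "Od = S 1 \<union> S 3" and S_disj: "S 1 \<inter> S 3 = {}"
proof -
  have "odd i \<longleftrightarrow> (wt3 i mod 4 = 1 \<or> wt3 i mod 4 = 3)" for i
  proof -
    have "odd i \<longleftrightarrow> odd (wt3 i)" by (rule odd_wt3)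
    also have "\<dots> \<longleftrightarrow> (wt3 i mod 4 = 1 \<or> wt3 i mod 4 = 3)" by (rule odd4)
    finally show ?thesis .
  qed
  thus "Od = S 1 \<union> S 3" unfolding Od_def S_def by auto
  show "S 1 \<inter> S 3 = {}" unfolding S_def by auto
qed

lemma card_Od: "card Od = n"
proof -
  have "Od = (\<lambda>k. 2*k+1) ` {..<n}"
  proof
    show "Od \<subseteq> (\<lambda>k. 2*k+1) ` {..<n}"
    proof
      fix i assume i: "i \<in> Od"
      hence "odd i" "i \<le> N - 1" unfolding Od_def N_def by auto
      then obtain k where "i = 2*k+1" by (metis oddE)
      moreover have "k < n" using \<open>i \<le> N - 1\<close> calculation N_2n N_pos by linarith
      ultimately show "i \<in> (\<lambda>k. 2*k+1) ` {..<n}" by blast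
    qed
    show "(\<lambda>k. 2*k+1) ` {..<n} \<subseteq> Od"
      unfolding Od_def using N_2n unfolding N_def by auto
  qed
  moreover have "inj_on (\<lambda>k. 2*k+1) {..<n}" by (auto simp: inj_on_def)
  ultimately show ?thesis by (simp add: card_image)
qed

lemma card_S13: "card (S 1) + card (S 3) = n"
  using card_Od Od_eq S_disj finite_S card_Un_disjoint by metis

abbreviation "G I \<equiv> (\<Prod>i\<in>I. [:- (\<beta> ^ i), 1:])"

lemma gpoly_G: "gpoly \<beta> j m = G (S j)"
  unfolding gpoly_def S_def by simp

lemma G_reindex: "I \<subseteq> {..<N} \<Longrightarrow> G I = (\<Prod>a\<in>(\<lambda>i. \<beta> ^ i) ` I. [:- a, 1:])"
  using inj_on_subset[OF beta_inj] by (simp add: prod.reindex)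

lemma G_dvd_iff:
  assumes "I \<subseteq> {..<N}"
  shows "G I dvd p \<longleftrightarrow> (\<forall>i\<in>I. poly p (\<beta> ^ i) = 0)"
proof
  assume "G I dvd p"
  moreover have "poly (G I) (\<beta> ^ i) = 0" if "i \<in> I" for i
  proof -
    have fin: "finite I" using assms by (rule finite_subset) simp
    show ?thesis using that fin by (simp add: poly_prod prod_zero_iff) (metis add.inverse_neutral add.left_inverse add.commute)
  qed
  ultimately show "\<forall>i\<in>I. poly p (\<beta> ^ i) = 0" by (auto elim!: dvdE)
next
  assume h: "\<forall>i\<in>I. poly p (\<beta> ^ i) = 0"
  have fin: "finite I" using assms by (rule finite_subset) simp
  show "G I dvd p" unfolding G_reindex[OF assms]
    by (rule prod_roots_dvd) (use fin h in auto)
qed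

lemma poly_M: "odd i \<Longrightarrow> poly M (\<beta> ^ i) = 0"
proof -
  assume "odd i"
  have "poly M (\<beta> ^ i) = (\<beta> ^ n) ^ i + 1" unfolding M_def
    by (simp add: poly_monom power_mult[symmetric] mult.commute)
  also have "\<dots> = 0" using beta_n \<open>odd i\<close> by simp
  finally show ?thesis .
qed

lemma degree_M: "degree M = n" and lead_M: "lead_coeff M = 1"
proof -
  have "degree (1::'a poly) < degree (monom (1::'a) n)" using n_pos by (simp add: degree_monom_eq)
  thus "degree M = n" "lead_coeff M = 1" unfolding M_def
    by (simp_all add: degree_add_eq_left degree_monom_eq lead_coeff_add_le[of 1, simplified add.commute])
qed

lemma M_ne0: "M \<noteq> 0" using lead_M by auto

lemma G_Od: "G Od = M"
proof (rule monic_dvd_eq)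
  show "G Od dvd M" using G_dvd_iff[OF Od_sub'] poly_M unfolding Od_def by auto
  show "M \<noteq> 0" by (rule M_ne0)
  show "degree (G Od) = degree M" using degree_prod_lin card_Od degree_M by metis
  show "lead_coeff (G Od) = 1" by (rule lead_prod_lin)
  show "lead_coeff M = 1" by (rule lead_M)
qed

lemma g1g3: "gpoly \<beta> 1 m * gpoly \<beta> 3 m = M"
  unfolding gpoly_G G_Od[symmetric] Od_eq
  by (rule prod.union_disjoint[symmetric]) (use finite_S S_disj in auto)

lemma degree_g: "degree (gpoly \<beta> j m) = card (S j)"
  unfolding gpoly_G by (rule degree_prod_lin)

lemma lead_g: "lead_coeff (gpoly \<beta> j m) = 1"
  unfolding gpoly_G by (rule lead_prod_lin)

lemma g_ne0: "gpoly \<beta> j m \<noteq> 0" using lead_g[of j] by auto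

lemma g_dvd_iff: "gpoly \<beta> j m dvd p \<longleftrightarrow> (\<forall>i\<in>S j. poly p (\<beta> ^ i) = 0)"
  unfolding gpoly_G by (rule G_dvd_iff[OF S_sub'])

lemma g_dvd_M: "j = 1 \<or> j = 3 \<Longrightarrow> gpoly \<beta> j m dvd M"
  using g1g3 by (metis dvd_triv_left dvd_triv_right)

lemma g_pp: "gpoly \<beta> j m \<in> prime_polys"
proof -
  define \<sigma> where "\<sigma> i = (3*i) mod N" for i
  have \<sigma>S: "\<sigma> i \<in> S j" if "i \<in> S j" for i
    using wt3_rot[OF m1, of i] that unfolding S_def \<sigma>_def N_def by auto
  have \<sigma>pow: "\<beta> ^ \<sigma> i = (\<beta> ^ i) ^ 3" for i
    unfolding \<sigma>_def by (metis beta_pow_mod power_mult mult.commute)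
  have inj: "inj_on \<sigma> (S j)"
  proof
    fix i i' assume ii: "i \<in> S j" "i' \<in> S j" "\<sigma> i = \<sigma> i'"
    hence "(\<beta> ^ i) ^ 3 = (\<beta> ^ i') ^ 3" using \<sigma>pow by metis
    hence "\<beta> ^ i = \<beta> ^ i'" using cube_inj by blast
    moreover have "i \<in> {..<N}" "i' \<in> {..<N}" using ii S_sub' by auto
    ultimately show "i = i'" using beta_inj by (auto dest: inj_onD)
  qed
  have img: "\<sigma> ` S j = S j"
  proof (rule card_subset_eq)
    show "finite (S j)" by (rule finite_S)
    show "\<sigma> ` S j \<subseteq> S j" using \<sigma>S by auto
    show "card (\<sigma> ` S j) = card (S j)" using inj by (rule card_image)
  qed
  have "fr (gpoly \<beta> j m) = (\<Prod>i\<in>S j. [:- ((\<beta> ^ i)^3), 1:])"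
    unfolding gpoly_G by (simp add: fr_prod fr_lin)
  also have "\<dots> = (\<Prod>i\<in>S j. [:- (\<beta> ^ \<sigma> i), 1:])" by (simp add: \<sigma>pow)
  also have "\<dots> = (\<Prod>i\<in>\<sigma> ` S j. [:- (\<beta> ^ i), 1:])" using inj by (simp add: prod.reindex)
  also have "\<dots> = gpoly \<beta> j m" unfolding img gpoly_G ..
  finally show ?thesis by (simp add: pp_iff)
qed

lemma M_pp: "M \<in> prime_polys"
  unfolding M_def by (intro pp_add pp_monom pp_1 pf_1)

lemma S_refl: "j = 1 \<or> j = 3 \<Longrightarrow> i \<in> S j \<Longrightarrow> N - i \<in> S j"
proof -
  assume j: "j = 1 \<or> j = 3" and i: "i \<in> S j"
  have ilt: "i < 3^m" using i unfolding S_def by auto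
  have c: "wt3 i \<le> 2*m" "wt3 (3^m - 1 - i) = 2*m - wt3 i" using wt3_compl[OF ilt] by auto
  have "(2*m - wt3 i) mod 4 = j" using odd_mod4[OF oddm c(1)] i j unfolding S_def by auto
  moreover have "1 \<le> 3^m - 1 - i" "3^m - 1 - i \<le> 3^m - 2" using i unfolding S_def by auto
  ultimately show ?thesis using c unfolding S_def N_def by auto
qed

end

section \<open>A BCH-type argument\<close>

lemma bch_core:
  fixes a z :: "nat \<Rightarrow> 'a::field"
  assumes fin: "finite Q" and ne: "Q \<noteq> {}" and cQ: "card Q \<le> R"
    and inj: "inj_on z Q" and a0: "\<forall>p\<in>Q. a p \<noteq> 0"
    and sums: "\<forall>t<R. (\<Sum>p\<in>Q. a p * z p ^ t) = 0"
  shows False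
proof -
  obtain p0 where p0: "p0 \<in> Q" using ne by auto
  define Lp where "Lp = (\<Prod>p\<in>Q - {p0}. [:- z p, 1:])"
  have dL: "degree Lp = card Q - 1" unfolding Lp_def
    using degree_prod_lin[of z "Q - {p0}"] fin p0 by simp
  have "(\<Sum>t\<le>degree Lp. coeff Lp t * (\<Sum>p\<in>Q. a p * z p ^ t)) = 0"
  proof (rule sum.neutral, rule ballI)
    fix t assume "t \<in> {..degree Lp}"
    hence "t < R" using dL cQ p0 fin by (metis atMost_iff card_gt_0_iff diff_less le_less_trans less_le_trans ne zero_less_one)
    thus "coeff Lp t * (\<Sum>p\<in>Q. a p * z p ^ t) = 0" using sums by simp
  qed
  also have "(\<Sum>t\<le>degree Lp. coeff Lp t * (\<Sum>p\<in>Q. a p * z p ^ t))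
      = (\<Sum>p\<in>Q. a p * poly Lp (z p))"
    by (simp add: poly_altdef sum_distrib_left sum_distrib_right sum.swap[of _ Q] algebra_simps)
  also have "\<dots> = a p0 * poly Lp (z p0) + (\<Sum>p\<in>Q - {p0}. a p * poly Lp (z p))"
    by (rule sum.remove[OF fin p0])
  also have "(\<Sum>p\<in>Q - {p0}. a p * poly Lp (z p)) = 0"
  proof (rule sum.neutral, rule ballI)
    fix p assume "p \<in> Q - {p0}"
    thus "a p * poly Lp (z p) = 0" unfolding Lp_def using fin
      by (auto simp: poly_prod prod_zero_iff)
  qed
  finally have "a p0 * poly Lp (z p0) = 0" by simp
  moreover have "poly Lp (z p0) \<noteq> 0"
  proof -
    have "\<forall>p\<in>Q - {p0}. z p0 - z p \<noteq> 0" using inj p0 by (auto dest: inj_onD)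
    thus ?thesis unfolding Lp_def using fin by (simp add: poly_prod prod_zero_iff)
  qed
  ultimately show False using a0 p0 by simp
qed

lemma poly_sum_n:
  fixes c :: "'a::comm_semiring_1 poly"
  assumes "\<forall>i\<ge>n. coeff c i = 0"
  shows "poly c x = (\<Sum>p<n. coeff c p * x ^ p)"
proof (cases "c = 0")
  case True thus ?thesis by simp
next
  case False
  have dn: "degree c < n"
  proof (rule ccontr)
    assume "\<not> degree c < n"
    hence "coeff c (degree c) = 0" using assms by simp
    thus False using False by simp
  qed
  have "poly c x = (\<Sum>p\<le>degree c. coeff c p * x ^ p)" by (rule poly_altdef)
  also have "\<dots> = (\<Sum>p<n. coeff c p * x ^ p)"
  proof (rule sum.mono_neutral_left)
    show "finite {..<n}" by simp
    show "{..degree c} \<subseteq> {..<n}" using dn by auto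
    show "\<forall>i\<in>{..<n} - {..degree c}. coeff c i * x ^ i = 0" by (auto simp: coeff_eq_0)
  qed
  finally show ?thesis .
qed

context L
begin

definition "code j = {w \<in> ambient n. gpoly \<beta> j m dvd w}"

lemma code_eq: "j = 1 \<or> j = 3 \<Longrightarrow> negacyclic_code n (gpoly \<beta> j m) = code j"
proof -
  assume j: "j = 1 \<or> j = 3"
  let ?g = "gpoly \<beta> j m"
  have gM: "?g dvd M" using g_dvd_M[OF j] .
  show ?thesis
  proof
    show "negacyclic_code n ?g \<subseteq> code j"
    proof
      fix w assume "w \<in> negacyclic_code n ?g"
      then obtain a where a: "a \<in> prime_polys" "w = (a * ?g) mod M"
        unfolding negacyclic_code_def M_def by auto
      have "w \<in> prime_polys" using a pp_divmod[OF pp_mult[OF a(1) g_pp] M_pp] by simp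
      moreover have "w = 0 \<or> degree w < n" using a(2) degree_mod_less[OF M_ne0] degree_M by metis
      moreover have "?g dvd w" using a(2) gM by (simp add: dvd_mod_iff)
      ultimately show "w \<in> code j" unfolding code_def by (simp add: ambient_iff)
    qed
    show "code j \<subseteq> negacyclic_code n ?g"
    proof
      fix w assume "w \<in> code j"
      hence w: "w \<in> prime_polys" "w = 0 \<or> degree w < n" "?g dvd w"
        unfolding code_def by (auto simp: ambient_iff)
      define r where "r = w div ?g"
      have r: "r \<in> prime_polys" unfolding r_def using pp_divmod[OF w(1) g_pp] by simp
      have "r * ?g = w" unfolding r_def using w(3) by simp
      moreover have "w mod M = w" using w(2) degree_M by (auto intro: mod_poly_less)
      ultimately have "w = (r * ?g) mod M \<and> r \<in> prime_polys" using r by simp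
      thus "w \<in> negacyclic_code n ?g"
        unfolding negacyclic_code_def M_def[symmetric] by blast
    qed
  qed
qed

lemma card_S_lt: "j = 1 \<or> j = 3 \<Longrightarrow> card (S j) < n"
proof -
  assume j: "j = 1 \<or> j = 3"
  have "(3::nat)^2 \<le> 3^m" using m5 by (intro power_increasing) simp_all
  hence le: "(9::nat) \<le> 3^m" by simp
  have "1 \<in> S 1" unfolding S_def using le by (simp add: wt3_small)
  moreover have "wt3 5 = 3" using wt3_3q[of 2 1] wt3_small[of 1] by simp
  hence "5 \<in> S 3" unfolding S_def using le by simp
  ultimately have "card (S 1) > 0" "card (S 3) > 0" using finite_S by (auto simp: card_gt_0_iff)
  thus ?thesis using card_S13 j by auto
qed

lemma card_code: "j = 1 \<or> j = 3 \<Longrightarrow> card (code j) = 3 ^ (n - card (S j)) \<and> finite (code j)"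
proof -
  assume j: "j = 1 \<or> j = 3"
  let ?g = "gpoly \<beta> j m"
  let ?d = "card (S j)"
  have dg: "degree ?g = ?d" by (rule degree_g)
  have dn: "?d < n" using card_S_lt[OF j] .
  have bij: "bij_betw (\<lambda>r. r * ?g) (ambient (n - ?d)) (code j)"
  proof (rule bij_betw_imageI)
    show "inj_on (\<lambda>r. r * ?g) (ambient (n - ?d))" using g_ne0 by (auto simp: inj_on_def)
    show "(\<lambda>r. r * ?g) ` ambient (n - ?d) = code j"
    proof
      show "(\<lambda>r. r * ?g) ` ambient (n - ?d) \<subseteq> code j"
      proof
        fix w assume "w \<in> (\<lambda>r. r * ?g) ` ambient (n - ?d)"
        then obtain r where r: "r \<in> prime_polys" "r = 0 \<or> degree r < n - ?d" "w = r * ?g"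
          by (auto simp: ambient_iff)
        have "w \<in> prime_polys" using r pp_mult g_pp by simp
        moreover have "w = 0 \<or> degree w < n"
        proof (cases "r = 0")
          case False
          hence "degree w = degree r + ?d" using r(3) dg g_ne0 by (simp add: degree_mult_eq)
          thus ?thesis using r(2) False dn by auto
        qed (use r in simp)
        ultimately show "w \<in> code j" unfolding code_def using r by (simp add: ambient_iff)
      qed
      show "code j \<subseteq> (\<lambda>r. r * ?g) ` ambient (n - ?d)"
      proof
        fix w assume "w \<in> code j"
        hence w: "w \<in> prime_polys" "w = 0 \<or> degree w < n" "?g dvd w"
          unfolding code_def by (auto simp: ambient_iff)
        define r where "r = w div ?g"
        have r: "r \<in> prime_polys" unfolding r_def using pp_divmod[OF w(1) g_pp] by simp
        have e: "w = r * ?g" unfolding r_def using w(3) by simp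
        have "r = 0 \<or> degree r < n - ?d"
        proof (cases "r = 0")
          case False
          hence "degree w = degree r + ?d" using e dg g_ne0 by (simp add: degree_mult_eq)
          hence "w \<noteq> 0" using False by (metis e g_ne0 mult_eq_0_iff)
          thus ?thesis using w(2) \<open>degree w = degree r + ?d\<close> by auto
        qed simp
        thus "w \<in> (\<lambda>r. r * ?g) ` ambient (n - ?d)" using r e by (auto simp: ambient_iff)
      qed
    qed
  qed
  have "finite (code j)" using bij_betw_finite[OF bij] finite_ambient by blast
  moreover have "card (code j) = card (ambient (n - ?d) :: 'a poly set)"
    using bij_betw_same_card[OF bij] by simp
  ultimately show ?thesis using card_ambient by simp
qed

lemma code_diff: "w \<in> code j \<Longrightarrow> w' \<in> code j \<Longrightarrow> w - w' \<in> code j"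
  unfolding code_def ambient_def by (auto intro: pp_diff dvd_diff)

lemma code_0: "0 \<in> code j"
  unfolding code_def ambient_def by (auto intro: pp_0)

lemma g_in_code: "j = 1 \<or> j = 3 \<Longrightarrow> gpoly \<beta> j m \<in> code j"
  unfolding code_def using g_pp card_S_lt degree_g by (simp add: ambient_iff)

definition "wt c = card {i. i < n \<and> coeff c i \<noteq> 0}"

lemma min_dist_ge:
  assumes j: "j = 1 \<or> j = 3"
    and wt_ge: "\<And>c. c \<in> code j \<Longrightarrow> c \<noteq> 0 \<Longrightarrow> wt c \<ge> D"
  shows "min_dist n (negacyclic_code n (gpoly \<beta> j m)) \<ge> D"
proof -
  let ?H = "{hamming_dist n c c' | c c'. c \<in> code j \<and> c' \<in> code j \<and> c \<noteq> c'}"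
  have hd: "hamming_dist n c c' \<le> n" for c c' :: "'a poly"
  proof -
    have "card {i. i < n \<and> coeff c i \<noteq> coeff c' i} \<le> card {..<n}"
      by (rule card_mono) auto
    thus ?thesis unfolding hamming_dist_def by simp
  qed
  have "?H \<subseteq> {..n}" using hd by auto
  hence fin: "finite ?H" by (rule finite_subset) simp
  have "hamming_dist n (gpoly \<beta> j m) 0 \<in> ?H" using g_in_code[OF j] code_0 g_ne0 by blast
  hence ne: "?H \<noteq> {}" by blast
  have "\<forall>x\<in>?H. x \<ge> D"
  proof
    fix x assume "x \<in> ?H"
    then obtain c c' where cc: "c \<in> code j" "c' \<in> code j" "c \<noteq> c'" "x = hamming_dist n c c'" by blast
    have "x = wt (c - c')" unfolding cc(4) hamming_dist_def wt_def by simp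
    thus "x \<ge> D" using wt_ge[OF code_diff[OF cc(1,2)]] cc(3) by simp
  qed
  thus ?thesis unfolding min_dist_def code_eq[OF j] using fin ne by simp
qed

lemma wt_bch:
  assumes c: "c \<in> code j" "c \<noteq> 0"
    and inj: "inj_on (\<lambda>p. \<beta> ^ (s * p)) {..<n}"
    and roots: "\<forall>t<R. e + t * s \<in> S j"
  shows "wt c \<ge> R + 1"
proof (rule ccontr)
  assume "\<not> wt c \<ge> R + 1"
  hence cQ: "wt c \<le> R" by simp
  let ?Q = "{i. i < n \<and> coeff c i \<noteq> 0}"
  have cn: "\<forall>i\<ge>n. coeff c i = 0" using c unfolding code_def ambient_def by auto
  have finQ: "finite ?Q" by simp
  have neQ: "?Q \<noteq> {}"
  proof
    assume "?Q = {}"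
    hence "\<forall>i. coeff c i = 0" using cn by (metis (mono_tags, lifting) empty_Collect_eq not_le)
    thus False using c(2) by (simp add: poly_eq_iff)
  qed
  have sums: "\<forall>t<R. (\<Sum>p\<in>?Q. (coeff c p * \<beta> ^ (e * p)) * (\<beta> ^ (s * p)) ^ t) = 0"
  proof (intro allI impI)
    fix t assume t: "t < R"
    have "poly c (\<beta> ^ (e + t * s)) = 0"
      using roots t c(1) unfolding code_def g_dvd_iff by auto
    moreover have "poly c (\<beta> ^ (e + t * s)) = (\<Sum>p<n. coeff c p * (\<beta> ^ (e + t * s)) ^ p)"
      by (rule poly_sum_n[OF cn])
    moreover have "(\<Sum>p<n. coeff c p * (\<beta> ^ (e + t * s)) ^ p) = (\<Sum>p\<in>?Q. coeff c p * (\<beta> ^ (e + t * s)) ^ p)"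
      by (rule sum.mono_neutral_right) auto
    moreover have "\<And>p. (\<beta> ^ (e + t * s)) ^ p = \<beta> ^ (e * p) * (\<beta> ^ (s * p)) ^ t"
      by (simp add: power_add power_mult[symmetric] algebra_simps)
    ultimately show "(\<Sum>p\<in>?Q. (coeff c p * \<beta> ^ (e * p)) * (\<beta> ^ (s * p)) ^ t) = 0"
      by (simp add: algebra_simps)
  qed
  have injQ: "inj_on (\<lambda>p. \<beta> ^ (s * p)) ?Q" using inj by (rule inj_on_subset) auto
  have a0: "\<forall>p\<in>?Q. coeff c p * \<beta> ^ (e * p) \<noteq> 0" using beta_ne0 by simp
  show False
    by (rule bch_core[OF finQ neQ cQ[unfolded wt_def] injQ a0 sums])
qed

end

context L
begin

definition "hh = (m - 1) div 2"

lemma m_hh: "m = 2*hh + 1" unfolding hh_def using oddm by (metis add.commute oddE add_diff_cancel_left' nonzero_mult_div_cancel_left zero_neq_numeral)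

lemma hh2: "hh \<ge> 2" using m_hh m5 by linarith

lemma pow_m: "(3::nat)^m = 3 * (3^hh)^2"
proof -
  have "(3::nat)^m = 3^(hh*2+1)" using m_hh by (metis mult.commute)
  also have "\<dots> = 3^(hh*2) * 3" by simp
  finally have "(3::nat)^m = 3^(hh*2) * 3" .
  also have "(3::nat)^(hh*2) = (3^hh)^2" by (rule power_mult)
  finally show ?thesis by simp
qed

lemma mod4_h:
  "even (h::nat) \<Longrightarrow> (1 + 2*h) mod 4 = 1" "odd h \<Longrightarrow> (3 + 2*h) mod 4 = 1"
  "odd h \<Longrightarrow> (1 + 2*h) mod 4 = 3" "even h \<Longrightarrow> (3 + 2*h) mod 4 = 3"
proof -
  show "even (h::nat) \<Longrightarrow> (1 + 2*h) mod 4 = 1" by (elim evenE) simp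
  show "even (h::nat) \<Longrightarrow> (3 + 2*h) mod 4 = 3" by (elim evenE) simp
  show "odd (h::nat) \<Longrightarrow> (3 + 2*h) mod 4 = 1"
  proof (elim oddE)
    fix q assume "h = 2*q+1"
    hence "3 + 2*h = 4*(q+1) + 1" by simp
    thus "(3 + 2*h) mod 4 = 1" by simp
  qed
  show "odd (h::nat) \<Longrightarrow> (1 + 2*h) mod 4 = 3"
  proof (elim oddE)
    fix q assume "h = 2*q+1"
    hence "1 + 2*h = 4*q + 3" by simp
    thus "(1 + 2*h) mod 4 = 3" by simp
  qed
qed

lemma coprime_sn: "coprime n (((3::nat)^hh - 1) div 2)"
proof (rule coprimeI)
  fix d assume dn: "d dvd n" and ds: "d dvd ((3::nat)^hh - 1) div 2"
  define x where "x = (3::int)^hh"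
  have x1: "x \<ge> 1" unfolding x_def by simp
  have ev: "even ((3::nat)^hh - 1)" by simp
  have s2: "int (2 * (((3::nat)^hh - 1) div 2)) = x - 1"
    using ev x1 unfolding x_def by (simp add: of_nat_diff)
  have n2: "int (2 * n) = 3 * x^2 - 1"
  proof -
    have "int (2*n) = int N" using N_2n by simp
    also have "\<dots> = int (3^m) - 1" unfolding N_def using N_pos N_def by (simp add: of_nat_diff)
    also have "\<dots> = 3 * x^2 - 1" unfolding x_def using pow_m by simp
    finally show ?thesis .
  qed
  have a: "int (2*d) dvd x - 1" using ds s2 by (metis int_dvd_int_iff mult_dvd_mono dvd_refl)
  have b: "int (2*d) dvd 3 * x^2 - 1" using dn n2 by (metis int_dvd_int_iff mult_dvd_mono dvd_refl)
  have "3 * x^2 - 1 = (x - 1) * (3*x + 3) + 2" by (simp add: algebra_simps power2_eq_square)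
  hence "int (2*d) dvd 2" using a b by (metis dvd_add_right_iff dvd_mult2)
  hence "2*d dvd 2" by (metis int_dvd_int_iff of_nat_numeral)
  hence "d dvd 1" by simp
  thus "is_unit d" by simp
qed

lemma inj_s: "inj_on (\<lambda>p. \<beta> ^ (((3::nat)^hh - 1) * p)) {..<n}"
proof -
  define s where "s = (3::nat)^hh - 1"
  define s' where "s' = s div 2"
  have s2: "s = 2 * s'" unfolding s'_def s_def by simp
  have main: "a = b" if ab: "a < n" "b < n" "b \<le> a" "\<beta> ^ (s * a) = \<beta> ^ (s * b)" for a b
  proof -
    have "(s*a) mod N = (s*b) mod N" using ab(4) beta_pow_eq_iff by blast
    hence "N dvd s*a - s*b" using ab(3) by (simp add: mod_eq_dvd_iff_nat)
    hence "2*n dvd 2*(s' * (a - b))" using N_2n s2 by (simp add: diff_mult_distrib2 mult.assoc)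
    hence "n dvd s' * (a - b)" by simp
    hence "n dvd a - b" using coprime_sn unfolding s'_def s_def by (simp add: coprime_dvd_mult_right_iff)
    moreover have "a - b < n" using ab by simp
    ultimately have "a - b = 0" by (metis dvd_imp_le neq0_conv not_le)
    thus "a = b" using ab(3) by simp
  qed
  show ?thesis unfolding s_def[symmetric]
  proof (rule inj_onI)
    fix a b assume "a \<in> {..<n}" "b \<in> {..<n}" "\<beta> ^ (s * a) = \<beta> ^ (s * b)"
    thus "a = b" using main[of a b] main[of b a] by (cases "b \<le> a") auto
  qed
qed

lemma run:
  assumes k: "k \<le> hh" and C: "C \<ge> 1" and Cb: "C * 3^k + 3^k \<le> 2 * 3^hh"
    and wC: "(wt3 C + 2*hh) mod 4 = j"
  shows "\<forall>t<3^k. (C * 3^(hh+k) + 3^hh - 1) + t * (3^hh - 1) \<in> S j"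
proof (intro allI impI)
  fix t :: nat assume t: "t < 3^k"
  define X where "X = (3::nat)^hh"
  have kX: "(3::nat)^k \<le> X" unfolding X_def using k by (rule power_increasing) simp
  have tX: "t < X" using t kX by simp
  obtain u where u: "X = t + 1 + u" using tX by (metis add.commute less_imp_Suc_add add_Suc_right Suc_eq_plus1)
  have val: "(C * 3^(hh+k) + 3^hh - 1) + t * (3^hh - 1) = (C*3^k + t) * X + (X - 1 - t)"
    unfolding X_def[symmetric] using u by (simp add: power_add X_def[symmetric] algebra_simps)
  have w1: "wt3 ((C*3^k + t) * X + (X - 1 - t)) = wt3 (C*3^k + t) + wt3 (X - 1 - t)"
    unfolding X_def by (rule wt3_add) (use tX X_def in simp)
  have w2: "wt3 (C*3^k + t) = wt3 C + wt3 t" using wt3_add[OF t, of C] by simp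
  have w3: "wt3 t \<le> 2*hh" "wt3 (X - 1 - t) = 2*hh - wt3 t" using wt3_compl[of t hh] tX unfolding X_def by auto
  have wt: "wt3 ((C*3^k + t) * X + (X - 1 - t)) = wt3 C + 2*hh" using w1 w2 w3 by simp
  have X1: "X \<ge> 1" unfolding X_def by simp
  have lo: "1 \<le> (C*3^k + t) * X + (X - 1 - t)"
  proof -
    have "0 < C * 3^k" using C by simp
    hence "1 \<le> C*3^k + t" by linarith
    hence "1 \<le> (C*3^k + t) * X" using X1 by (simp add: one_le_mult_iff)
    thus ?thesis by linarith
  qed
  have hi: "(C*3^k + t) * X + (X - 1 - t) \<le> 3^m - 2"
  proof -
    have "(C*3^k + t) * X + (X - 1 - t) \<le> (C*3^k + t) * X + X - 1" using tX by simp
    also have "\<dots> = (C*3^k + t + 1) * X - 1" by (simp add: algebra_simps)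
    also have "\<dots> \<le> (2 * X) * X - 1"
    proof -
      have "C*3^k + t + 1 \<le> 2 * X" using Cb t unfolding X_def by linarith
      hence "(C*3^k + t + 1) * X \<le> (2 * X) * X" by (rule mult_right_mono) simp
      thus ?thesis by simp
    qed
    also have "\<dots> \<le> 3^m - 2"
    proof -
      have "3^m = 3 * X * X" unfolding X_def using pow_m by (simp add: power2_eq_square)
      moreover have "X * X \<ge> 1" using X1 by simp
      ultimately show ?thesis by (simp add: algebra_simps)
    qed
    finally show ?thesis .
  qed
  show "(C * 3^(hh+k) + 3^hh - 1) + t * (3^hh - 1) \<in> S j"
    unfolding S_def val using lo hi wt wC by simp
qed

lemma dist_run:
  assumes j: "j = 1 \<or> j = 3"
    and k: "k \<le> hh" and C: "C \<ge> 1" and Cb: "C * 3^k + 3^k \<le> 2 * 3^hh"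
    and wC: "(wt3 C + 2*hh) mod 4 = j"
  shows "min_dist n (negacyclic_code n (gpoly \<beta> j m)) \<ge> 3^k + 1"
proof (rule min_dist_ge[OF j])
  fix c assume "c \<in> code j" "c \<noteq> 0"
  thus "wt c \<ge> 3^k + 1"
    by (rule wt_bch[OF _ _ inj_s run[OF k C Cb wC]])
qed

lemma wt3_5: "wt3 5 = 3" using wt3_3q[of 2 1] wt3_small[of 1] by simp
lemma wt3_1: "wt3 1 = 1" "wt3 (Suc 0) = 1" using wt3_small[of 1] by simp_all

lemma pow_hh1: "(3::nat)^hh = 3 * 3^(hh-1)" using hh2 by (metis Suc_diff_1 not_numeral_le_zero not_gr0 power_Suc le_zero_eq)

lemma dist1: "real (min_dist n (negacyclic_code n (gpoly \<beta> 1 m)))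
           \<ge> ((3::real) ^ hh + 2 + (-1) ^ hh) / 4 + 3"
proof (cases "even hh")
  case True
  have "min_dist n (negacyclic_code n (gpoly \<beta> 1 m)) \<ge> 3^hh + 1"
    by (rule dist_run[where C=1]) (use True mod4_h in \<open>auto simp: wt3_1\<close>)
  moreover have "((3::real) ^ hh + 2 + (-1) ^ hh) / 4 + 3 \<le> real (3^hh + 1)"
  proof -
    have "(9::real) \<le> 3^hh" using power_increasing[OF hh2, of "3::real"] by simp
    moreover have "(-1::real)^hh = 1" using True by simp
    ultimately show ?thesis by (simp add: field_simps)
  qed
  ultimately show ?thesis by (meson of_nat_le_iff order_trans)
next
  case False
  have "min_dist n (negacyclic_code n (gpoly \<beta> 1 m)) \<ge> 3^(hh-1) + 1"
  proof (rule dist_run[where C=5])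
    show "(wt3 5 + 2*hh) mod 4 = 1" using False wt3_5 mod4_h by simp
  qed (use pow_hh1 in auto)
  moreover have "((3::real) ^ hh + 2 + (-1) ^ hh) / 4 + 3 \<le> real (3^(hh-1) + 1)"
  proof -
    have "hh \<ge> 3" using False hh2 by presburger
    hence "(9::real) \<le> 3^(hh-1)" using power_increasing[of 2 "hh-1" "3::real"] by simp
    moreover have "(3::real)^hh = 3 * 3^(hh-1)" using pow_hh1 by (metis of_nat_numeral of_nat_power of_nat_mult)
    moreover have "(-1::real)^hh = -1" using False by simp
    ultimately show ?thesis by (simp add: field_simps)
  qed
  ultimately show ?thesis by (meson of_nat_le_iff order_trans)
qed

lemma dist3: "real (min_dist n (negacyclic_code n (gpoly \<beta> 3 m)))
           \<ge> ((3::real) ^ hh - (-1) ^ hh) / 4 + 2"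
proof (cases "odd hh")
  case True
  have "min_dist n (negacyclic_code n (gpoly \<beta> 3 m)) \<ge> 3^hh + 1"
    by (rule dist_run[where C=1]) (use True mod4_h in \<open>auto simp: wt3_1\<close>)
  moreover have "((3::real) ^ hh - (-1) ^ hh) / 4 + 2 \<le> real (3^hh + 1)"
  proof -
    have "(9::real) \<le> 3^hh" using power_increasing[OF hh2, of "3::real"] by simp
    moreover have "(-1::real)^hh = -1" using True by simp
    ultimately show ?thesis by (simp add: field_simps)
  qed
  ultimately show ?thesis by (meson of_nat_le_iff order_trans)
next
  case False
  have "min_dist n (negacyclic_code n (gpoly \<beta> 3 m)) \<ge> 3^(hh-1) + 1"
  proof (rule dist_run[where C=5])
    show "(wt3 5 + 2*hh) mod 4 = 3" using False wt3_5 mod4_h by simp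
  qed (use pow_hh1 in auto)
  moreover have "((3::real) ^ hh - (-1) ^ hh) / 4 + 2 \<le> real (3^(hh-1) + 1)"
  proof -
    have "(3::real) \<le> 3^(hh-1)" using power_increasing[of 1 "hh-1" "3::real"] hh2 by simp
    moreover have "(3::real)^hh = 3 * 3^(hh-1)" using pow_hh1 by (metis of_nat_numeral of_nat_power of_nat_mult)
    moreover have "(-1::real)^hh = 1" using False by simp
    ultimately show ?thesis by (simp add: field_simps)
  qed
  ultimately show ?thesis by (meson of_nat_le_iff order_trans)
qed

end

context L
begin

definition rv :: "'a poly \<Rightarrow> 'a poly" where "rv v = (\<Sum>i<n. monom (coeff v i) (n - 1 - i))"

lemma coeff_rv: "coeff (rv v) k = (if k < n then coeff v (n - 1 - k) else 0)"
proof -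
  have "coeff (rv v) k = (\<Sum>i<n. if n - 1 - i = k then coeff v i else 0)"
    unfolding rv_def by (simp add: coeff_sum coeff_monom)
  also have "\<dots> = (\<Sum>i<n. if i = n - 1 - k \<and> k < n then coeff v (n - 1 - k) else 0)"
    by (rule sum.cong) auto
  also have "\<dots> = (if k < n then coeff v (n - 1 - k) else 0)"
    using n_pos by (auto simp: sum.delta)
  finally show ?thesis .
qed

lemma poly_rv:
  assumes cn: "\<forall>i\<ge>n. coeff v i = 0" and z: "z \<noteq> 0"
  shows "poly (rv v) z = z ^ (n - 1) * poly v (inverse z)"
proof -
  have "poly (rv v) z = (\<Sum>i<n. coeff v i * z ^ (n - 1 - i))"
    unfolding rv_def by (simp add: poly_sum poly_monom)
  also have "\<dots> = (\<Sum>i<n. z ^ (n - 1) * (coeff v i * (inverse z) ^ i))"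
  proof (rule sum.cong[OF refl])
    fix i assume "i \<in> {..<n}"
    hence "i \<le> n - 1" by simp
    hence "z ^ (n - 1 - i) = z ^ (n - 1) / z ^ i" by (rule power_diff[OF z])
    thus "coeff v i * z ^ (n - 1 - i) = z ^ (n - 1) * (coeff v i * (inverse z) ^ i)"
      by (simp add: divide_inverse power_inverse)
  qed
  also have "\<dots> = z ^ (n - 1) * poly v (inverse z)"
    by (simp add: poly_sum_n[OF cn] sum_distrib_left)
  finally show ?thesis .
qed

lemma coeff_mult_rv:
  "coeff (c * rv v) (n - 1) = (\<Sum>i<n. coeff c i * coeff v i)"
proof -
  have "coeff (c * rv v) (n - 1) = (\<Sum>i\<le>n-1. coeff c i * coeff (rv v) (n - 1 - i))"
    by (rule coeff_mult)
  also have "\<dots> = (\<Sum>i\<le>n-1. coeff c i * coeff v i)"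
    by (rule sum.cong[OF refl]) (use n_pos in \<open>auto simp: coeff_rv\<close>)
  also have "{..n-1} = {..<n}" using n_pos by auto
  finally show ?thesis .
qed

lemma code3_sub_dual: "code 3 \<subseteq> dual_code n (code 1)"
proof
  fix v assume v: "v \<in> code 3"
  have vn: "\<forall>i\<ge>n. coeff v i = 0" and va: "v \<in> ambient n" using v unfolding code_def ambient_def by auto
  have "(\<Sum>i<n. coeff v i * coeff c i) = 0" if c: "c \<in> code 1" for c
  proof -
    have cn: "\<forall>i\<ge>n. coeff c i = 0" using c unfolding code_def ambient_def by auto
    have r3: "poly (rv v) (\<beta> ^ i) = 0" if i: "i \<in> S 3" for i
    proof -
      have z: "\<beta> ^ i \<noteq> 0" using beta_ne0 by simp
      have iN: "i \<le> N" using i unfolding S_def N_def by auto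
      have "\<beta> ^ i * \<beta> ^ (N - i) = 1" using iN beta_N by (simp add: power_add[symmetric])
      hence inv: "inverse (\<beta> ^ i) = \<beta> ^ (N - i)" by (metis inverse_unique)
      have "poly v (\<beta> ^ (N - i)) = 0"
        using v S_refl[OF _ i] unfolding code_def g_dvd_iff by auto
      thus ?thesis using poly_rv[OF vn z] inv by simp
    qed
    have r1: "poly c (\<beta> ^ i) = 0" if "i \<in> S 1" for i
      using c that unfolding code_def g_dvd_iff by auto
    have "\<forall>i\<in>Od. poly (c * rv v) (\<beta> ^ i) = 0" using r1 r3 Od_eq by auto
    hence "M dvd c * rv v" using G_dvd_iff[OF Od_sub'] G_Od by simp
    then obtain q where q: "c * rv v = M * q" by (auto elim: dvdE)
    have "coeff (M * q) (n - 1) = 0"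
    proof (cases "q = 0")
      case False
      hence ne: "c * rv v \<noteq> 0" using q M_ne0 by simp
      hence "c \<noteq> 0" "rv v \<noteq> 0" by auto
      have dc: "degree c \<le> n - 1"
        by (rule degree_le) (use cn n_pos in auto)
      have dr: "degree (rv v) \<le> n - 1"
        by (rule degree_le) (auto simp: coeff_rv)
      have "degree (M * q) = n + degree q" using False M_ne0 degree_M by (simp add: degree_mult_eq)
      moreover have "degree (c * rv v) \<le> (n - 1) + (n - 1)"
        using degree_mult_le[of c "rv v"] dc dr by linarith
      ultimately have "n + degree q \<le> n - 1 + (n - 1)" using q by simp
      hence dq: "degree q < n - 1" using n_pos by arith
      have "coeff (M * q) (n - 1) = coeff (monom 1 n * q) (n - 1) + coeff q (n - 1)"
        unfolding M_def by (simp add: distrib_right)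
      also have "\<dots> = 0" using dq n_pos by (simp add: coeff_monom_mult coeff_eq_0)
      finally show ?thesis .
    qed simp
    hence "(\<Sum>i<n. coeff c i * coeff v i) = 0" using q coeff_mult_rv[of c v] by simp
    thus ?thesis by (simp add: mult.commute)
  qed
  thus "v \<in> dual_code n (code 1)" unfolding dual_code_def using va by auto
qed

lemma dual_tri:
  assumes w: "w \<in> dual_code n (code 1)" and low: "\<forall>k<card (S 1). coeff w k = 0"
  shows "w = 0"
proof -
  let ?g = "gpoly \<beta> 1 m"
  let ?d = "card (S 1)"
  have dg: "degree ?g = ?d" by (rule degree_g)
  have lg: "coeff ?g ?d = 1" using lead_g[of 1] dg by simp
  have wn: "\<forall>i\<ge>n. coeff w i = 0" using w unfolding dual_code_def ambient_def by auto
  have orth: "(\<Sum>i<n. coeff w i * coeff c i) = 0" if "c \<in> code 1" for c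
    using w that unfolding dual_code_def by auto
  have uk: "monom 1 k * ?g \<in> code 1" if "k + ?d < n" for k
  proof -
    have "monom 1 k * ?g \<in> prime_polys" by (intro pp_mult pp_monom pf_1 g_pp)
    moreover have "degree (monom 1 k * ?g) < n"
      using that dg g_ne0 by (simp add: degree_mult_eq degree_monom_eq)
    ultimately show ?thesis unfolding code_def by (simp add: ambient_iff)
  qed
  have "coeff w i = 0" if "i < n" for i
    using that
  proof (induction i rule: less_induct)
    case (less i)
    have IH: "\<forall>j<i. j < n \<longrightarrow> coeff w j = 0" using less.IH by blast
    have i: "i < n" by (rule less.prems)
    show "coeff w i = 0"
      proof (cases "i < ?d")
        case True thus ?thesis using low by simp
      next
        case False
        define k where "k = i - ?d"
        have ki: "i = k + ?d" using False unfolding k_def by simp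
        have "0 = (\<Sum>j<n. coeff w j * coeff (monom 1 k * ?g) j)"
          using orth[OF uk] ki i by simp
        also have "\<dots> = coeff w i * coeff (monom 1 k * ?g) i"
        proof (rule sum.remove[THEN trans])
          show "finite {..<n}" by simp
          show "i \<in> {..<n}" using i by simp
          have "(\<Sum>j\<in>{..<n} - {i}. coeff w j * coeff (monom 1 k * ?g) j) = 0"
          proof (rule sum.neutral, rule ballI)
            fix j assume j: "j \<in> {..<n} - {i}"
            show "coeff w j * coeff (monom 1 k * ?g) j = 0"
            proof (cases "j < i")
              case True thus ?thesis using IH j by auto
            next
              case False
              hence "j > i" using j by auto
              hence "j - k > degree ?g" using ki dg by simp
              hence "coeff (monom 1 k * ?g) j = 0" using \<open>j > i\<close> ki
                by (simp add: coeff_monom_mult coeff_eq_0)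
              thus ?thesis by simp
            qed
          qed
          thus "coeff w i * coeff (monom 1 k * ?g) i
              + (\<Sum>j\<in>{..<n} - {i}. coeff w j * coeff (monom 1 k * ?g) j)
              = coeff w i * coeff (monom 1 k * ?g) i" by simp
        qed
        also have "coeff (monom 1 k * ?g) i = 1" using ki lg by (simp add: coeff_monom_mult)
        finally show ?thesis by simp
      qed
  qed
  thus "w = 0" using wn by (metis leI poly_eqI coeff_0)
qed

lemma dual_diff: "(v::'a poly) \<in> dual_code n C \<Longrightarrow> v' \<in> dual_code n C \<Longrightarrow> v - v' \<in> dual_code n C"
  unfolding dual_code_def ambient_def
  by (auto intro: pp_diff simp: left_diff_distrib sum_subtractf)

lemma dual_eq: "dual_code n (code 1) = code 3"
proof -
  let ?D = "dual_code n (code 1)"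
  let ?d = "card (S 1)"
  define \<phi> where "\<phi> v = Poly (map (coeff v) [0..<?d])" for v :: "'a poly"
  have coeff_\<phi>: "coeff (\<phi> v) k = (if k < ?d then coeff v k else 0)" for v k
    unfolding \<phi>_def by (simp add: nth_default_def)
  have finD: "finite ?D" using finite_ambient[of n]
    by (rule finite_subset[rotated]) (auto simp: dual_code_def)
  have inj: "inj_on \<phi> ?D"
  proof
    fix v v' assume vv: "v \<in> ?D" "v' \<in> ?D" "\<phi> v = \<phi> v'"
    have "\<forall>k<?d. coeff (v - v') k = 0"
    proof (intro allI impI)
      fix k assume "k < ?d"
      thus "coeff (v - v') k = 0" using arg_cong[OF vv(3), of "\<lambda>p. coeff p k"] by (simp add: coeff_\<phi>)
    qed
    hence "v - v' = 0" by (rule dual_tri[OF dual_diff[OF vv(1,2)]])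
    thus "v = v'" by simp
  qed
  have img: "\<phi> ` ?D \<subseteq> ambient ?d"
  proof
    fix p assume "p \<in> \<phi> ` ?D"
    then obtain v where v: "v \<in> ?D" "p = \<phi> v" by auto
    have "\<forall>i. coeff v i \<in> prime_subfield" using v(1) unfolding dual_code_def ambient_def prime_polys_def by auto
    thus "p \<in> ambient ?d" unfolding v(2) ambient_def prime_polys_def by (auto simp: coeff_\<phi> pf_0)
  qed
  have "card ?D \<le> card (ambient ?d :: 'a poly set)"
    by (rule card_inj_on_le[OF inj img finite_ambient])
  also have "\<dots> = 3 ^ ?d" by (rule card_ambient)
  also have "\<dots> = card (code 3)" using card_code[of 3] card_S13 by simp
  finally have "card ?D \<le> card (code 3)" .
  thus ?thesis using card_seteq[OF finD code3_sub_dual] by simp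
qed

end

context L
begin

lemma S_eq: "j = 1 \<or> j = 3 \<Longrightarrow> S j = {i. i < 3^m \<and> wt3 i mod 4 = j}"
proof -
  assume j: "j = 1 \<or> j = 3"
  have w2: "wt3 (3^m - 1) = 2*m" using wt3_compl[of 0 m] by simp
  obtain k where k: "m = 2*k+1" using oddm by (elim oddE)
  have e: "2*m = 2 + k*4" using k by simp
  have "(2*m) mod 4 = 2" unfolding e by (simp only: mod_mult_self1) simp
  hence ne: "wt3 (3^m - 1) mod 4 \<noteq> j" using j w2 by auto
  show ?thesis
  proof
    show "S j \<subseteq> {i. i < 3^m \<and> wt3 i mod 4 = j}" unfolding S_def using N_pos N_def by auto
    show "{i. i < 3^m \<and> wt3 i mod 4 = j} \<subseteq> S j"
    proof
      fix i assume i: "i \<in> {i. i < 3^m \<and> wt3 i mod 4 = j}"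
      have "i \<noteq> 0"
      proof
        assume "i = 0" hence "wt3 i mod 4 = 0" by simp
        thus False using i j by auto
      qed
      moreover have "i \<noteq> 3^m - 1" using i ne by auto
      ultimately show "i \<in> S j" using i unfolding S_def by auto
    qed
  qed
qed

lemma card_S_Cs: "j = 1 \<or> j = 3 \<Longrightarrow> int (card (S j)) = Cs m j"
  using S_eq Cs_card by simp

end

theorem theorem44:
  fixes \<beta> :: "'a::{field,finite}" and m :: nat
  assumes "odd m" and "m \<ge> 5"
    and "card (UNIV :: 'a set) = 3 ^ m"
    and "primitive_element \<beta>"
  defines "n \<equiv> (3 ^ m - 1) div 2"
  shows "has_dim3 (negacyclic_code n (gpoly \<beta> 1 m))
             (nat (((3::int) ^ m - 1 + 2 * (-1) ^ ((m + 1) div 2)) div 4))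
       \<and> real (min_dist n (negacyclic_code n (gpoly \<beta> 1 m)))
             \<ge> ((3::real) ^ ((m - 1) div 2) + 2 + (-1) ^ ((m - 1) div 2)) / 4 + 3
       \<and> dual_code n (negacyclic_code n (gpoly \<beta> 1 m)) = negacyclic_code n (gpoly \<beta> 3 m)
       \<and> has_dim3 (negacyclic_code n (gpoly \<beta> 3 m))
             (nat (((3::int) ^ m - 1 + 2 * (-1) ^ ((m - 1) div 2)) div 4))
       \<and> real (min_dist n (negacyclic_code n (gpoly \<beta> 3 m)))
             \<ge> ((3::real) ^ ((m - 1) div 2) - (-1) ^ ((m - 1) div 2)) / 4 + 2"
proof -
  interpret I: L \<beta> m by unfold_locales (use assms in auto)
  have nn: "n = L.n m" unfolding n_def I.n_def ..
  have hh: "(m - 1) div 2 = L.hh m" unfolding I.hh_def ..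
  define h where "h = L.hh m"
  have mh: "m = 2*h + 1" unfolding h_def by (rule I.m_hh)
  have mh1: "(m + 1) div 2 = h + 1" using mh by simp
  have c1: "L.code \<beta> m 1 = negacyclic_code n (gpoly \<beta> 1 m)" using I.code_eq[of 1] nn by simp
  have c3: "L.code \<beta> m 3 = negacyclic_code n (gpoly \<beta> 3 m)" using I.code_eq[of 3] nn by simp
  have s13: "card (L.S m 1) + card (L.S m 3) = n" using I.card_S13 nn by simp
  have cs1: "4 * int (card (L.S m 1)) = 3^m - 1 + 2 * (-1)^h"
    using I.card_S_Cs[of 1] Cs_odd(1)[of h] mh by simp
  have cs3: "4 * int (card (L.S m 3)) = 3^m - 1 - 2 * (-1)^h"
    using I.card_S_Cs[of 3] Cs_odd(2)[of h] mh by simp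
  have A: "has_dim3 (negacyclic_code n (gpoly \<beta> 1 m))
             (nat (((3::int) ^ m - 1 + 2 * (-1) ^ ((m + 1) div 2)) div 4))"
  proof -
    have "((3::int) ^ m - 1 + 2 * (-1) ^ ((m + 1) div 2)) = 4 * int (card (L.S m 3))"
      using cs3 mh1 by simp
    hence "nat (((3::int) ^ m - 1 + 2 * (-1) ^ ((m + 1) div 2)) div 4) = card (L.S m 3)" by simp
    moreover have "n - card (L.S m 1) = card (L.S m 3)" using s13 by simp
    ultimately show ?thesis using I.card_code[of 1] c1 nn unfolding has_dim3_def by simp
  qed
  have B: "has_dim3 (negacyclic_code n (gpoly \<beta> 3 m))
             (nat (((3::int) ^ m - 1 + 2 * (-1) ^ ((m - 1) div 2)) div 4))"
  proof -
    have "((3::int) ^ m - 1 + 2 * (-1) ^ ((m - 1) div 2)) = 4 * int (card (L.S m 1))"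
      using cs1 hh unfolding h_def by simp
    hence "nat (((3::int) ^ m - 1 + 2 * (-1) ^ ((m - 1) div 2)) div 4) = card (L.S m 1)" by simp
    moreover have "n - card (L.S m 3) = card (L.S m 1)" using s13 by simp
    ultimately show ?thesis using I.card_code[of 3] c3 nn unfolding has_dim3_def by simp
  qed
  have D: "dual_code n (negacyclic_code n (gpoly \<beta> 1 m)) = negacyclic_code n (gpoly \<beta> 3 m)"
    using I.dual_eq c1 c3 nn by simp
  have d1: "real (min_dist n (negacyclic_code n (gpoly \<beta> 1 m)))
             \<ge> ((3::real) ^ ((m - 1) div 2) + 2 + (-1) ^ ((m - 1) div 2)) / 4 + 3"
    using I.dist1 nn hh by simp
  have d3: "real (min_dist n (negacyclic_code n (gpoly \<beta> 3 m)))
             \<ge> ((3::real) ^ ((m - 1) div 2) - (-1) ^ ((m - 1) div 2)) / 4 + 2"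
    using I.dist3 nn hh by simp
  show ?thesis using A B D d1 d3 by blast
qed

end
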